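(* Let $0<\epsilon<M$ and let $t=(x=a+z^2,\ y=\sum_{k\ge0}b_kz^k)$ where $\sum_kb_kz^k$ converges for $|z|<\bar M$ for some $\bar M>M$ and $|a|<\min(\bar M^2-M^2,\epsilon^2)$. Put $\Phi(t):=z\,d(z^2)-\exp\big(-a\mathcal{L}_{\frac{1}{2z}\partial_z}\big)\big(y\,d(z^2)\big)$. Then $\Phi(t)\in W^{\epsilon,M}_{Airy}$ and for all integers $m,n\ge0$, $\mathrm{Res}_{z=0}\Big(\big(z-\tfrac{\Phi(t)}{2z\,dz}\big)^mz^{2n}d(z^2)\Big)=0$; in particular $\Phi(t)$ satisfies all residue constraints $(H_{Airy})_i(\Phi(t))=0$, $i\ge1$.
   Context: $W^{\epsilon,M}_{Airy}$: Laurent series $\sum_{k\ne0}\xi_kz^k\frac{dz}{z}$ (no $dz/z$ term) converging on an annulus $\bar\epsilon<|z|<\bar M$ with $\bar\epsilon<\epsilon<M<\bar M$. $\mathcal{L}_{\frac{1}{2z}\partial_z}$ is the Lie derivative along $\frac{1}{2z}\partial_z$ and $\exp(a\mathcal{L})=\sum_m\frac{a^m}{m!}\mathcal{L}^m$ (so $\exp(a\mathcal{L}_{\frac1{2z}\partial_z})(f(z)dz)=f(\sqrt{z^2+a})\,d\sqrt{z^2+a}$ for small $|a|$). Residues are coefficients of $dz/z$ in the Laurent expansion on $\epsilon<|z|<M$. The residue constraints: $(H_{Airy})_{2n}(w)=\mathrm{Res}((z-\frac{w}{2zdz})z^{2n}d(z^2))$, $(H_{Airy})_{2n-1}(w)=\frac12\mathrm{Res}((z-\frac{w}{2zdz})^2z^{2n-2}d(z^2))$,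 $n\ge1$. *)

theory Defs
  imports "HOL-Complex_Analysis.Complex_Analysis"
begin

text \<open>A meromorphic 1-form \<open>\<phi>(z) dz\<close> is represented by its coefficient function \<open>\<phi>\<close>.\<close>

text \<open>Lie derivative along the vector field \<open>1/(2z) \<partial>_z\<close> acting on \<open>f(z) dz\<close>:
  by Cartan's formula \<open>L_v(f dz) = d(\<iota>_v (f dz)) = d(f/(2z))\<close>.\<close>
definition lie_Airy :: "(complex \<Rightarrow> complex) \<Rightarrow> complex \<Rightarrow> complex" where
  "lie_Airy f = (\<lambda>z. deriv (\<lambda>w. f w / (2 * w)) z)"

definition exp_lie_Airy :: "complex \<Rightarrow> (complex \<Rightarrow> complex) \<Rightarrow> complex \<Rightarrow> complex" where
  "exp_lie_Airy a f = (\<lambda>z. \<Sum>m. (a ^ m / fact m) * (lie_Airy ^^ m) f z)"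

text \<open>\<open>\<Phi>(t) = z d(z^2) - exp(-a L)(y d(z^2))\<close> with \<open>y = \<Sum> b_k z^k\<close>; as coefficient of dz.\<close>
definition Phi_Airy :: "complex \<Rightarrow> (nat \<Rightarrow> complex) \<Rightarrow> complex \<Rightarrow> complex" where
  "Phi_Airy a b = (\<lambda>z. 2 * z ^ 2
      - exp_lie_Airy (- a) (\<lambda>w. 2 * w * (\<Sum>k. b k * w ^ k)) z)"

definition W_Airy :: "real \<Rightarrow> real \<Rightarrow> (complex \<Rightarrow> complex) \<Rightarrow> bool" where
  "W_Airy \<epsilon> M \<phi> \<longleftrightarrow> (\<exists>\<epsilon>' M' (\<xi>::int \<Rightarrow> complex). 0 \<le> \<epsilon>' \<and> \<epsilon>' < \<epsilon> \<and> M < M' \<and> \<xi> 0 = 0 \<and>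
      (\<forall>z. \<epsilon>' < norm z \<and> norm z < M' \<longrightarrow>
           ((\<lambda>k. \<xi> k * z powi k / z) has_sum \<phi> z) UNIV))"

text \<open>Residue of the form \<open>g(z) dz\<close> on the annulus \<open>\<epsilon> < |z| < M\<close>: coefficient of \<open>dz/z\<close>
  of its Laurent expansion there, computed as \<open>(2\<pi>i)^{-1} \<oint>_{|z|=r} g\<close>, \<open>r = (\<epsilon>+M)/2\<close>.\<close>
definition res_Airy :: "real \<Rightarrow> real \<Rightarrow> (complex \<Rightarrow> complex) \<Rightarrow> complex" where
  "res_Airy \<epsilon> M g = contour_integral (circlepath 0 ((\<epsilon> + M) / 2)) g / (2 * pi * \<i>)"

text \<open>The form \<open>(z - w/(2z dz))^m z^{2n} d(z^2)\<close> as coefficient of dz.\<close>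
definition form_Airy :: "(complex \<Rightarrow> complex) \<Rightarrow> nat \<Rightarrow> nat \<Rightarrow> complex \<Rightarrow> complex" where
  "form_Airy w m n = (\<lambda>z. (z - w z / (2 * z)) ^ m * z ^ (2 * n) * (2 * z))"

definition H_Airy :: "real \<Rightarrow> real \<Rightarrow> nat \<Rightarrow> (complex \<Rightarrow> complex) \<Rightarrow> complex" where
  "H_Airy \<epsilon> M i w = (if even i then res_Airy \<epsilon> M (form_Airy w 1 (i div 2))
                     else res_Airy \<epsilon> M (form_Airy w 2 ((i + 1) div 2 - 1)) / 2)"

end

theory Submission
  imports Defs
begin

lemma taylor_has_sum:
  fixes f :: "complex \<Rightarrow> complex"
  assumes hol: "f holomorphic_on ball 0 r" and w: "norm w < r"
  shows "((\<lambda>n. (deriv ^^ n) f 0 / fact n * w^n) has_sum f w) UNIV"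
    and "summable (\<lambda>n. norm ((deriv ^^ n) f 0 / fact n * w^n))"
proof -
  define w' :: complex where "w' = of_real ((norm w + r)/2)"
  have nw': "norm w' = (norm w + r)/2"
    proof -
    have "0 \<le> norm w + r" using w norm_ge_zero[of w] by linarith
    then have "0 \<le> (norm w + r)/2" by simp
    then show ?thesis unfolding w'_def norm_of_real by simp
  qed
  have w'b: "w' \<in> ball 0 r" and ww': "norm w < norm w'"
    using w nw' by auto
  have S: "summable (\<lambda>n. (deriv ^^ n) f 0 / fact n * w'^n)"
    using holomorphic_power_series[OF hol w'b] by (auto simp: sums_iff)
  show sn: "summable (\<lambda>n. norm ((deriv ^^ n) f 0 / fact n * w^n))"
    by (rule powser_insidea[where f="\<lambda>n. (deriv ^^ n) f 0 / fact n", OF S ww'])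
  have sm: "(\<lambda>n. (deriv ^^ n) f 0 / fact n * w^n) sums f w"
    using holomorphic_power_series[OF hol, of w] w by simp
  show "((\<lambda>n. (deriv ^^ n) f 0 / fact n * w^n) has_sum f w) UNIV"
    by (rule norm_summable_imp_has_sum[OF sn sm])
qed

lemma group_has_sum:
  fixes c :: "'j \<Rightarrow> complex" and e :: "'j \<Rightarrow> int" and z :: complex
  assumes z: "z \<noteq> 0" and hs: "((\<lambda>j. c j * z powi e j) has_sum s) UNIV"
  shows "((\<lambda>k. infsum c {j. e j = k} * z powi k) has_sum s) UNIV"
proof -
  define F where "F = (\<lambda>(k::int, j). c j * z powi k)"
  have bij: "bij_betw (\<lambda>j. (e j, j)) UNIV (Sigma UNIV (\<lambda>k. {j. e j = k}))"
    by (auto simp: bij_betw_def inj_on_def image_def)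
  have "((\<lambda>j. F (e j, j)) has_sum s) UNIV"
    using hs by (simp add: F_def)
  then have S: "(F has_sum s) (Sigma UNIV (\<lambda>k. {j. e j = k}))"
    using has_sum_reindex_bij_betw[OF bij] by blast
  have summ: "(\<lambda>j. c j * z powi e j) summable_on UNIV"
    using hs summable_on_def by blast
  show ?thesis
  proof (rule has_sum_SigmaD[OF S])
    fix k :: int
    have "(\<lambda>j. c j * z powi e j) summable_on {j. e j = k}"
      using summable_on_subset_banach[OF summ] by blast
    then have "(\<lambda>j. c j * z powi k) summable_on {j. e j = k}"
      by (rule summable_on_cong[THEN iffD1, rotated]) auto
    then have "(\<lambda>j. (c j * z powi k) * inverse (z powi k)) summable_on {j. e j = k}"
      by (rule summable_on_cmult_left)
    moreover have "z powi k \<noteq> 0" using z by auto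
    ultimately have "c summable_on {j. e j = k}"
      by (simp add: mult.assoc)
    then show "((\<lambda>j. F (k, j)) has_sum infsum c {j. e j = k} * z powi k) {j. e j = k}"
      unfolding F_def by (auto intro!: has_sum_cmult_left has_sum_infsum)
  qed
qed

definition LSz :: "real \<Rightarrow> real \<Rightarrow> (complex \<Rightarrow> complex) \<Rightarrow> bool" where
  "LSz r1 r2 \<phi> \<longleftrightarrow> (\<exists>\<xi>::int\<Rightarrow>complex. \<xi> (-1) = 0 \<and>
     (\<forall>z. r1 < norm z \<and> norm z < r2 \<longrightarrow> ((\<lambda>k. \<xi> k * z powi k) has_sum \<phi> z) UNIV))"

lemma LSz_add:
  assumes "LSz r1 r2 f" "LSz r1 r2 g"
  shows "LSz r1 r2 (\<lambda>z. f z + g z)"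
proof -
  obtain \<xi> where 1: "\<xi> (-1) = 0" "\<forall>z. r1 < norm z \<and> norm z < r2 \<longrightarrow> ((\<lambda>k. \<xi> k * z powi k) has_sum f z) UNIV"
    using assms(1) LSz_def by blast
  obtain \<eta> where 2: "\<eta> (-1) = 0" "\<forall>z. r1 < norm z \<and> norm z < r2 \<longrightarrow> ((\<lambda>k. \<eta> k * z powi k) has_sum g z) UNIV"
    using assms(2) LSz_def by blast
  show ?thesis unfolding LSz_def
    apply (rule exI[of _ "\<lambda>k. \<xi> k + \<eta> k"])
    using 1 2 by (auto simp: distrib_right intro!: has_sum_add)
qed

lemma LSz_family:
  fixes c :: "'j \<Rightarrow> complex" and e :: "'j \<Rightarrow> int"
  assumes e: "\<And>j. e j \<noteq> -1" and r1: "0 \<le> r1"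
    and hs: "\<And>z. r1 < norm z \<Longrightarrow> norm z < r2 \<Longrightarrow> ((\<lambda>j. c j * z powi e j) has_sum \<phi> z) UNIV"
  shows "LSz r1 r2 \<phi>"
  unfolding LSz_def
proof (intro exI[of _ "\<lambda>k. infsum c {j. e j = k}"] conjI allI impI)
  show "infsum c {j. e j = - 1} = 0" using e by simp
  fix z :: complex assume "r1 < norm z \<and> norm z < r2"
  then show "((\<lambda>k. infsum c {j. e j = k} * z powi k) has_sum \<phi> z) UNIV"
    using r1 hs by (intro group_has_sum) auto
qed

lemma W_from_LSz:
  assumes "0 \<le> r1" "r1 < \<epsilon>" "M < r2" "LSz r1 r2 \<phi>"
  shows "W_Airy \<epsilon> M \<phi>"
proof -
  obtain \<xi> where 1: "\<xi> (-1) = 0" "\<forall>z. r1 < norm z \<and> norm z < r2 \<longrightarrow> ((\<lambda>k. \<xi> k * z powi k) has_sum \<phi> z) UNIV"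
    using assms(4) LSz_def by blast
  have bij: "bij_betw (\<lambda>x::int. x + 1) UNIV UNIV"
    by (rule bij_betwI[where g="\<lambda>x. x - 1"]) auto
  have H: "\<forall>z. r1 < norm z \<and> norm z < r2 \<longrightarrow> ((\<lambda>k. \<xi> (k - 1) * z powi k / z) has_sum \<phi> z) UNIV"
  proof (intro allI impI)
    fix z :: complex assume z: "r1 < norm z \<and> norm z < r2"
    then have z0: "z \<noteq> 0" using assms(1) by auto
    have eq: "\<xi> (x + 1 - 1) * z powi (x + 1) / z = \<xi> x * z powi x" for x
      using z0 by (simp add: power_int_add)
    have "((\<lambda>x. \<xi> (x + 1 - 1) * z powi (x + 1) / z) has_sum \<phi> z) UNIV"
      unfolding eq using 1(2) z by blast
    then show "((\<lambda>k. \<xi> (k - 1) * z powi k / z) has_sum \<phi> z) UNIV"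
      using has_sum_reindex_bij_betw[OF bij, of "\<lambda>k. \<xi> (k - 1) * z powi k / z"] by blast
  qed
  show ?thesis unfolding W_Airy_def
    by (intro exI[of _ r1] exI[of _ r2] exI[of _ "\<lambda>k. \<xi> (k - 1)"] conjI)
       (use assms(1-3) 1(1) H in \<open>simp_all\<close>)
qed

lemma powser_holo:
  fixes c :: "nat \<Rightarrow> complex"
  assumes "\<And>u. norm u < R \<Longrightarrow> summable (\<lambda>k. c k * u^k)"
  shows "(\<lambda>u. \<Sum>k. c k * u^k) holomorphic_on ball 0 R"
proof -
  have "ereal R \<le> fps_conv_radius (Abs_fps c)"
    unfolding fps_conv_radius_def
    by (rule conv_radius_geI_ex') (use assms in auto)
  then have "ball 0 R \<subseteq> eball 0 (fps_conv_radius (Abs_fps c))"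
  proof (intro subsetI)
    fix x assume "x \<in> ball 0 R" "ereal R \<le> fps_conv_radius (Abs_fps c)"
    then have xr: "ereal (dist 0 x) < ereal R" by simp
    show "x \<in> eball 0 (fps_conv_radius (Abs_fps c))"
      using less_le_trans[OF xr \<open>ereal R \<le> _\<close>] by (simp add: eball_def)
  qed
  then have "eval_fps (Abs_fps c) holomorphic_on ball 0 R"
    by (rule holomorphic_on_eval_fps)
  moreover have "eval_fps (Abs_fps c) = (\<lambda>u. \<Sum>k. c k * u^k)"
    by (auto simp: eval_fps_def fun_eq_iff)
  ultimately show ?thesis by simp
qed


definition Yb :: "(nat \<Rightarrow> complex) \<Rightarrow> complex \<Rightarrow> complex" where
  "Yb b w = (\<Sum>k. b k * w ^ k)"
definition Ye :: "(nat \<Rightarrow> complex) \<Rightarrow> complex \<Rightarrow> complex" where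
  "Ye b u = (\<Sum>k. b (2*k) * u ^ k)"
definition Yo :: "(nat \<Rightarrow> complex) \<Rightarrow> complex \<Rightarrow> complex" where
  "Yo b u = (\<Sum>k. b (2*k+1) * u ^ k)"

lemma b_abs:
  fixes b :: "nat \<Rightarrow> complex"
  assumes hb: "\<And>z. norm z < Mbar \<Longrightarrow> summable (\<lambda>k. b k * z^k)" and z: "norm z < Mbar"
  shows "summable (\<lambda>k. norm (b k * z^k))"
proof -
  define z' :: complex where "z' = of_real ((norm z + Mbar)/2)"
  have "0 \<le> norm z + Mbar" using z norm_ge_zero[of z] by linarith
  then have nz': "norm z' = (norm z + Mbar)/2"
    unfolding z'_def norm_of_real by simp
  have 1: "norm z' < Mbar" "norm z < norm z'" using nz' z by auto
  show ?thesis
    by (rule powser_insidea[where f=b, OF hb[OF 1(1)] 1(2)])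
qed

lemma sub_summable:
  fixes f :: "nat \<Rightarrow> real"
  assumes "summable f" "\<And>n. 0 \<le> f n" "strict_mono g"
  shows "summable (\<lambda>k. f (g k))"
proof -
  define h where "h n = (if n \<in> range g then f n else 0)" for n
  have "summable h"
    by (rule summable_comparison_test[OF _ assms(1)]) (use assms(2) in \<open>auto simp: h_def\<close>)
  then have "summable (\<lambda>k. h (g k))"
    using summable_mono_reindex[of g h] assms(3) by (auto simp: h_def)
  then show ?thesis by (simp add: h_def)
qed

lemma Yeo_summable:
  fixes b :: "nat \<Rightarrow> complex"
  assumes hb: "\<And>z. norm z < Mbar \<Longrightarrow> summable (\<lambda>k. b k * z^k)" and Mb: "0 < Mbar"
    and u: "norm u < Mbar^2"
  shows "summable (\<lambda>k. b (2*k) * u^k)" "summable (\<lambda>k. b (2*k+1) * u^k)"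
proof -
  define t where "t = sqrt ((norm u + Mbar^2)/2)"
  have "0 \<le> norm u + Mbar^2" using u norm_ge_zero[of u] by linarith
  then have t2: "t^2 = (norm u + Mbar^2)/2" unfolding t_def by simp
  have tpos: "0 < t" unfolding t_def using Mb norm_ge_zero[of u]
    by (simp add: add_nonneg_pos)
  have ut: "norm u \<le> t^2" using t2 u by simp
  have "t^2 < Mbar^2" using t2 u by simp
  then have tM: "t < Mbar" using Mb tpos by (simp add: power_less_imp_less_base)
  have "summable (\<lambda>k. norm (b k * of_real t ^ k))"
  proof (rule b_abs[OF hb])
    have "norm (of_real t :: complex) = t" using tpos by simp
    then show "norm (of_real t :: complex) < Mbar" using tM by simp
  qed
  then have sb: "summable (\<lambda>k. norm (b k) * t ^ k)"
    using tpos by (simp add: norm_mult norm_power)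
  have se: "summable (\<lambda>k. norm (b (2*k)) * t ^ (2*k))"
    by (rule sub_summable[OF sb, where g="\<lambda>k. 2*k"]) (use tpos in \<open>auto simp: strict_mono_def\<close>)
  have so: "summable (\<lambda>k. norm (b (2*k+1)) * t ^ (2*k+1))"
    by (rule sub_summable[OF sb, where g="\<lambda>k. 2*k+1"]) (use tpos in \<open>auto simp: strict_mono_def\<close>)
  have nuk: "norm u ^ k \<le> t ^ (2*k)" for k
    using ut by (simp add: power_mult power_mono)
  show "summable (\<lambda>k. b (2*k) * u^k)"
  proof (rule summable_comparison_test[OF _ se])
    show "\<exists>N. \<forall>n\<ge>N. norm (b (2*n) * u^n) \<le> norm (b (2*n)) * t ^ (2*n)"
      using nuk by (auto simp: norm_mult norm_power intro!: mult_left_mono)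
  qed
  have so': "summable (\<lambda>k. norm (b (2*k+1)) * t ^ (2*k+1) / t)"
    using so by (rule summable_divide)
  show "summable (\<lambda>k. b (2*k+1) * u^k)"
  proof (rule summable_comparison_test[OF _ so'])
    have "norm (b (2*n+1) * u^n) \<le> norm (b (2*n+1)) * t ^ (2*n+1) / t" for n
      using nuk[of n] tpos by (auto simp: norm_mult norm_power intro!: mult_left_mono)
    then show "\<exists>N. \<forall>n\<ge>N. norm (b (2*n+1) * u^n) \<le> norm (b (2*n+1)) * t ^ (2*n+1) / t"
      by auto
  qed
qed

lemma Y_split:
  fixes b :: "nat \<Rightarrow> complex"
  assumes hb: "\<And>z. norm z < Mbar \<Longrightarrow> summable (\<lambda>k. b k * z^k)" and Mb: "0 < Mbar"
    and s: "norm s < Mbar"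
  shows "Yb b s = Ye b (s^2) + s * Yo b (s^2)"
proof -
  have s2: "norm (s^2) < Mbar^2"
    using s by (simp add: norm_power power_strict_mono)
  define fe where "fe n = (if even n then b n * s^n else 0)" for n
  define fo where "fo n = (if odd n then b n * s^n else 0)" for n
  have "(\<lambda>k. b (2*k) * (s^2)^k) sums Ye b (s^2)"
    unfolding Ye_def using Yeo_summable(1)[OF hb Mb s2] by (simp add: summable_sums)
  moreover have "(\<lambda>k. fe (2*k)) = (\<lambda>k. b (2*k) * (s^2)^k)"
    by (auto simp: fe_def power_mult fun_eq_iff)
  ultimately have "(\<lambda>k. fe (2*k)) sums Ye b (s^2)" by simp
  then have fe: "fe sums Ye b (s^2)"
    by (subst (asm) sums_mono_reindex) (auto simp: strict_mono_def fe_def elim!: evenE)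
  have "(\<lambda>k. b (2*k+1) * (s^2)^k) sums Yo b (s^2)"
    unfolding Yo_def using Yeo_summable(2)[OF hb Mb s2] by (simp add: summable_sums)
  then have "(\<lambda>k. s * (b (2*k+1) * (s^2)^k)) sums (s * Yo b (s^2))"
    by (rule sums_mult)
  moreover have "(\<lambda>k. fo (2*k+1)) = (\<lambda>k. s * (b (2*k+1) * (s^2)^k))"
    by (auto simp: fo_def power_mult fun_eq_iff)
  ultimately have "(\<lambda>k. fo (2*k+1)) sums (s * Yo b (s^2))" by simp
  then have fo: "fo sums (s * Yo b (s^2))"
    by (subst (asm) sums_mono_reindex) (auto simp: strict_mono_def fo_def elim!: oddE)
  have "(\<lambda>n. fe n + fo n) sums (Ye b (s^2) + s * Yo b (s^2))"
    using fe fo by (rule sums_add)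
  moreover have "(\<lambda>n. fe n + fo n) = (\<lambda>n. b n * s^n)"
    by (auto simp: fe_def fo_def fun_eq_iff)
  ultimately show ?thesis
    unfolding Yb_def by (simp add: sums_iff)
qed

lemma Yb_holo:
  assumes hb: "\<And>z. norm z < Mbar \<Longrightarrow> summable (\<lambda>k. b k * z^k)"
  shows "Yb b holomorphic_on ball 0 Mbar"
  unfolding Yb_def[abs_def] by (rule powser_holo) (rule hb)

lemma Ye_holo:
  assumes hb: "\<And>z. norm z < Mbar \<Longrightarrow> summable (\<lambda>k. b k * z^k)" and Mb: "0 < Mbar"
  shows "Ye b holomorphic_on ball 0 (Mbar^2)"
proof -
  have "\<And>u. norm u < Mbar^2 \<Longrightarrow> summable (\<lambda>k. b (2*k) * u^k)"
    using Yeo_summable(1)[OF hb Mb] by blast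
  from powser_holo[OF this] show ?thesis unfolding Ye_def[abs_def] by simp
qed

lemma Yo_holo:
  assumes hb: "\<And>z. norm z < Mbar \<Longrightarrow> summable (\<lambda>k. b k * z^k)" and Mb: "0 < Mbar"
  shows "Yo b holomorphic_on ball 0 (Mbar^2)"
proof -
  have "\<And>u. norm u < Mbar^2 \<Longrightarrow> summable (\<lambda>k. b (2*k+1) * u^k)"
    using Yeo_summable(2)[OF hb Mb] by blast
  from powser_holo[OF this] show ?thesis unfolding Yo_def[abs_def] by simp
qed

lemma has_sum_product_complex:
  fixes x :: "'a \<Rightarrow> complex" and y :: "'b \<Rightarrow> complex"
  assumes hx: "(x has_sum X) UNIV" and hy: "(y has_sum Y) UNIV"
  shows "((\<lambda>(i,j). x i * y j) has_sum (X * Y)) UNIV"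
proof -
  have ax: "(\<lambda>i. norm (x i)) summable_on UNIV"
    using hx summable_on_def summable_on_iff_abs_summable_on_complex by blast
  have ay: "(\<lambda>j. norm (y j)) summable_on UNIV"
    using hy summable_on_def summable_on_iff_abs_summable_on_complex by blast
  have "(\<lambda>(i,j). norm (x i) * norm (y j)) summable_on Sigma UNIV (\<lambda>_. UNIV)"
  proof (rule summable_on_SigmaI[where g="\<lambda>i. norm (x i) * infsum (\<lambda>j. norm (y j)) UNIV"])
    fix i show "((\<lambda>j. case (i, j) of (i, j) \<Rightarrow> norm (x i) * norm (y j)) has_sum norm (x i) * infsum (\<lambda>j. norm (y j)) UNIV) UNIV"
      using has_sum_cmult_right[OF has_sum_infsum[OF ay], of "norm (x i)"] by simp
  next
    show "(\<lambda>i. norm (x i) * infsum (\<lambda>j. norm (y j)) UNIV) summable_on UNIV"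
      using ax by (rule summable_on_cmult_left)
  qed auto
  then have "(\<lambda>p. norm ((\<lambda>(i,j). x i * y j) p)) summable_on Sigma UNIV (\<lambda>_. UNIV)"
    by (rule summable_on_cong[THEN iffD1, rotated]) (auto simp: norm_mult)
  then have sm: "(\<lambda>(i,j). x i * y j) summable_on Sigma UNIV (\<lambda>_. UNIV)"
    using summable_on_iff_abs_summable_on_complex by blast
  have "((\<lambda>(i,j). x i * y j) has_sum (X * Y)) (Sigma UNIV (\<lambda>_. UNIV))"
  proof (rule has_sum_SigmaI[OF _ _ sm])
    fix i show "((\<lambda>j. case (i, j) of (i, j) \<Rightarrow> x i * y j) has_sum x i * Y) UNIV"
      using has_sum_cmult_right[OF hy] by simp
  next
    show "((\<lambda>i. x i * Y) has_sum X * Y) UNIV"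
      using has_sum_cmult_left[OF hx] by simp
  qed
  then show ?thesis by simp
qed


lemma Re_pos_near1:
  fixes w :: complex
  assumes "norm (w - 1) < 1" shows "0 < Re w"
  using abs_Re_le_cmod[of "w - 1"] assms by auto

lemma exp_lie_eval:
  fixes Y :: "complex \<Rightarrow> complex" and a z0 :: complex and Mbar :: real
  assumes Yhol: "Y holomorphic_on ball 0 Mbar" and Mb: "0 < Mbar"
    and a1: "norm a < (norm z0)^2" and a2: "(norm z0)^2 + norm a < Mbar^2"
  shows "exp_lie_Airy (-a) (\<lambda>w. 2 * w * Y w) z0 = 2 * z0 * Y (z0 * csqrt (1 - a / z0^2))"
proof -
  have z0: "z0 \<noteq> 0" using a1 norm_ge_zero[of a] by auto
  have nz0: "0 < (norm z0)^2" using z0 by simp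
  define R where "R = min ((norm z0)^2) (Mbar^2 - (norm z0)^2)"
  have aR: "norm a < R" using a1 a2 unfolding R_def by auto
  have Rle: "R \<le> (norm z0)^2" "(norm z0)^2 + R \<le> Mbar^2" unfolding R_def by auto
  define B where "B = ball (z0^2) R"
  have Bopen: "open B" unfolding B_def by simp
  define \<sigma> where "\<sigma> u = z0 * csqrt (u / z0^2)" for u
  have reB: "0 < Re (u / z0^2)" if "u \<in> B" for u
  proof (rule Re_pos_near1)
    have "u / z0^2 - 1 = (u - z0^2) / z0^2" using z0 by (simp add: field_simps)
    then have "norm (u / z0^2 - 1) = norm (u - z0^2) / (norm z0)^2"
      by (simp add: norm_divide norm_power)
    also have "norm (u - z0^2) < R" using that unfolding B_def by (simp add: dist_norm norm_minus_commute)
    then have "norm (u - z0^2) / (norm z0)^2 < R / (norm z0)^2"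
      using nz0 by (simp add: divide_strict_right_mono)
    also have "R / (norm z0)^2 \<le> 1" using Rle(1) nz0 by simp
    finally show "norm (u / z0^2 - 1) < 1" .
  qed
  have \<sigma>sq: "(\<sigma> u)^2 = u" for u
    using z0 by (simp add: \<sigma>_def power_mult_distrib)
  have \<sigma>norm: "norm (\<sigma> u) < Mbar" if "u \<in> B" for u
  proof -
    have "norm (\<sigma> u)^2 = norm u" using \<sigma>sq[of u] by (metis norm_power)
    also have "norm u \<le> norm (z0^2) + norm (u - z0^2)"
      by (metis add.commute diff_add_cancel norm_triangle_ineq)
    also have "norm (u - z0^2) < R" using that unfolding B_def by (simp add: dist_norm norm_minus_commute)
    then have "norm (z0^2) + norm (u - z0^2) < Mbar^2" using Rle(2) by (simp add: norm_power)
    finally have "norm (\<sigma> u)^2 < Mbar^2" .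
    then show ?thesis using Mb by (simp add: power_less_imp_less_base)
  qed
  have \<sigma>hol: "\<sigma> holomorphic_on B"
    unfolding \<sigma>_def[abs_def]
    by (intro holomorphic_intros) (auto simp: complex_nonpos_Reals_iff dest!: reB)
  define G where "G u = Y (\<sigma> u)" for u
  have Ghol: "G holomorphic_on B"
  proof -
    have "(Y \<circ> \<sigma>) holomorphic_on B"
      by (rule holomorphic_on_compose_gen[OF \<sigma>hol Yhol]) (use \<sigma>norm in auto)
    then show ?thesis by (simp add: G_def[abs_def] o_def)
  qed
  define U where "U = (\<lambda>w. w^2) -` B \<inter> {w. 0 < Re (w / z0)}"
  have Uopen: "open U"
    unfolding U_def
    by (intro open_Int open_vimage Bopen open_Collect_less continuous_intros) (use z0 in auto)
  have w0: "w \<noteq> 0" if "w \<in> U" for w using that by (auto simp: U_def)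
  have \<sigma>w: "\<sigma> (w^2) = w" if "w \<in> U" for w
  proof -
    have "csqrt (w^2 / z0^2) = csqrt ((w / z0)^2)" by (simp add: power_divide)
    also have "\<dots> = w / z0" using that by (intro csqrt_square) (auto simp: U_def)
    finally show ?thesis using z0 by (simp add: \<sigma>_def)
  qed
  have wB: "w^2 \<in> B" if "w \<in> U" for w using that by (auto simp: U_def)
  define F where "F = (\<lambda>w::complex. 2 * w * Y w)"
  have claim: "\<forall>w\<in>U. (lie_Airy ^^ m) F w = 2 * w * (deriv ^^ m) G (w^2)" for m
  proof (induction m)
    case 0
    show ?case by (auto simp: F_def G_def \<sigma>w)
  next
    case (Suc m)
    show ?case
    proof
      fix w assume w: "w \<in> U"
      have ev: "eventually (\<lambda>v. (lie_Airy ^^ m) F v / (2 * v) = (deriv ^^ m) G (v^2)) (nhds w)"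
        using eventually_nhds_in_open[OF Uopen w]
        by eventually_elim (use Suc.IH w0 in auto)
      have hd: "((deriv ^^ m) G has_field_derivative deriv ((deriv ^^ m) G) (w^2)) (at (w^2))"
        by (rule holomorphic_derivI[OF holomorphic_higher_deriv[OF Ghol Bopen] Bopen wB[OF w]])
      have sq: "((\<lambda>v. v^2) has_field_derivative 2 * w) (at w)"
        by (auto intro!: derivative_eq_intros)
      have D: "((\<lambda>v. (deriv ^^ m) G (v^2)) has_field_derivative deriv ((deriv ^^ m) G) (w^2) * (2 * w)) (at w)"
        by (rule DERIV_chain2[OF hd sq])
      have "(lie_Airy ^^ Suc m) F w = deriv (\<lambda>v. (lie_Airy ^^ m) F v / (2 * v)) w"
        by (simp add: lie_Airy_def)
      also have "\<dots> = deriv (\<lambda>v. (deriv ^^ m) G (v^2)) w"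
        by (rule deriv_cong_ev[OF ev refl])
      also have "\<dots> = deriv ((deriv ^^ m) G) (w^2) * (2 * w)"
        by (rule DERIV_imp_deriv[OF D])
      also have "\<dots> = 2 * w * (deriv ^^ Suc m) G (w^2)"
        by simp
      finally show "(lie_Airy ^^ Suc m) F w = 2 * w * (deriv ^^ Suc m) G (w^2)" .
    qed
  qed
  have z0U: "z0 \<in> U"
  proof -
    have "0 < R" using aR norm_ge_zero[of a] by linarith
    then show ?thesis using z0 by (auto simp: U_def B_def)
  qed
  have "z0^2 - a \<in> ball (z0^2) R" using aR by (simp add: dist_norm)
  from holomorphic_power_series[OF Ghol[unfolded B_def] this]
  have ps: "(\<lambda>n. (deriv ^^ n) G (z0^2) / fact n * (- a)^n) sums G (z0^2 - a)"
    by simp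
  then have "(\<lambda>n. 2 * z0 * ((deriv ^^ n) G (z0^2) / fact n * (- a)^n)) sums (2 * z0 * G (z0^2 - a))"
    by (rule sums_mult)
  moreover have "(\<lambda>n. 2 * z0 * ((deriv ^^ n) G (z0^2) / fact n * (- a)^n))
      = (\<lambda>n. ((- a)^n / fact n) * (lie_Airy ^^ n) F z0)"
    using claim z0U by (auto simp: fun_eq_iff)
  ultimately have "(\<lambda>n. ((- a)^n / fact n) * (lie_Airy ^^ n) F z0) sums (2 * z0 * G (z0^2 - a))"
    by simp
  then have "exp_lie_Airy (-a) F z0 = 2 * z0 * G (z0^2 - a)"
    unfolding exp_lie_Airy_def by (simp add: sums_iff)
  moreover have "(z0^2 - a) / z0^2 = 1 - a / z0^2" using z0 by (simp add: field_simps)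
  ultimately show ?thesis by (simp add: F_def G_def \<sigma>_def)
qed


definition Sf :: "complex \<Rightarrow> complex \<Rightarrow> complex" where
  "Sf a z = z * csqrt (1 - a / z^2)"

definition Ann :: "complex \<Rightarrow> real \<Rightarrow> complex set" where
  "Ann a Mbar = {z. norm a < (norm z)^2 \<and> (norm z)^2 + norm a < Mbar^2}"

lemma Ann_open: "open (Ann a Mbar)"
proof -
  have "Ann a Mbar = {z. norm a < (norm z)^2} \<inter> {z. (norm z)^2 + norm a < Mbar^2}"
    by (auto simp: Ann_def)
  also have "open \<dots>"
    by (intro open_Int open_Collect_less continuous_intros)
  finally show ?thesis .
qed

lemma Ann_nz: "z \<in> Ann a Mbar \<Longrightarrow> z \<noteq> 0"
  using norm_ge_zero[of a] by (auto simp: Ann_def)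

lemma q_Re: assumes "norm a < (norm z)^2" shows "0 < Re (1 - a / z^2)"
proof (rule Re_pos_near1)
  have z: "z \<noteq> 0" using assms norm_ge_zero[of a] by auto
  have "norm (1 - a / z^2 - 1) = norm a / (norm z)^2" by (simp add: norm_divide norm_power)
  also have "\<dots> < 1" using assms z by simp
  finally show "norm (1 - a / z^2 - 1) < 1" .
qed

lemma Sf_sq: "z \<noteq> 0 \<Longrightarrow> (Sf a z)^2 = z^2 - a"
  by (simp add: Sf_def power_mult_distrib field_simps)

lemma Sf_nz: "norm a < (norm z)^2 \<Longrightarrow> Sf a z \<noteq> 0"
  using q_Re[of a z] norm_ge_zero[of a] by (auto simp: Sf_def)

lemma Sf_norm:
  assumes "z \<in> Ann a Mbar" "0 < Mbar" shows "norm (Sf a z) < Mbar"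
proof -
  have z: "z \<noteq> 0" using Ann_nz assms(1) by blast
  have "norm (Sf a z)^2 = norm (z^2 - a)" using Sf_sq[OF z, of a] by (metis norm_power)
  also have "\<dots> \<le> (norm z)^2 + norm a" using norm_triangle_ineq4[of "z^2" a] by (simp add: norm_power)
  also have "\<dots> < Mbar^2" using assms(1) by (simp add: Ann_def)
  finally show ?thesis using assms(2) by (simp add: power_less_imp_less_base)
qed

lemma Sf_holo: "Sf a holomorphic_on Ann a Mbar"
proof -
  have 1: "\<And>z. z \<in> Ann a Mbar \<Longrightarrow> z^2 \<noteq> 0" using Ann_nz by simp
  have 2: "\<And>z. z \<in> Ann a Mbar \<Longrightarrow> 1 - a / z^2 \<notin> \<real>\<^sub>\<le>\<^sub>0"
  proof -
    fix z assume "z \<in> Ann a Mbar"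
    then have "0 < Re (1 - a / z^2)" using q_Re by (auto simp: Ann_def)
    then show "1 - a / z^2 \<notin> \<real>\<^sub>\<le>\<^sub>0" by (auto simp: complex_nonpos_Reals_iff)
  qed
  show ?thesis
    unfolding Sf_def[abs_def]
    by (intro holomorphic_intros) (use 1 2 in auto)
qed

lemma Sf_deriv:
  assumes z: "z \<in> Ann a Mbar"
  shows "(Sf a has_field_derivative z / Sf a z) (at z)"
proof -
  have z0: "z \<noteq> 0" using Ann_nz z by blast
  have Snz: "Sf a z \<noteq> 0" using Sf_nz z by (auto simp: Ann_def)
  have d: "(Sf a has_field_derivative deriv (Sf a) z) (at z)"
    by (rule holomorphic_derivI[OF Sf_holo Ann_open z])
  have d2: "((\<lambda>w. (Sf a w)^2) has_field_derivative 2 * Sf a z * deriv (Sf a) z) (at z)"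
  proof -
    have sq: "((\<lambda>x. x^2) has_field_derivative 2 * Sf a z) (at (Sf a z))"
      by (auto intro!: derivative_eq_intros)
    show ?thesis using DERIV_chain2[OF sq d] by (simp add: mult_ac)
  qed
  have d3: "((\<lambda>w. w^2 - a) has_field_derivative 2 * z) (at z)"
    by (auto intro!: derivative_eq_intros)
  have "((\<lambda>w. (Sf a w)^2) has_field_derivative 2 * z) (at z)"
    by (rule has_field_derivative_transform_within_open[OF d3 Ann_open z])
       (use Sf_sq Ann_nz in auto)
  then have "2 * Sf a z * deriv (Sf a) z = 2 * z" using d2 DERIV_unique by blast
  then have "deriv (Sf a) z = z / Sf a z" using Snz by (simp add: field_simps)
  then show ?thesis using d by simp
qed

lemma Phi_formula:
  fixes b :: "nat \<Rightarrow> complex"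
  assumes hb: "\<And>z. norm z < Mbar \<Longrightarrow> summable (\<lambda>k. b k * z^k)" and Mb: "0 < Mbar"
    and z: "z \<in> Ann a Mbar"
  shows "Phi_Airy a b z = 2 * z^2 - 2 * z * Yb b (Sf a z)"
proof -
  have "(\<lambda>w. 2 * w * (\<Sum>k. b k * w ^ k)) = (\<lambda>w. 2 * w * Yb b w)"
    by (simp add: Yb_def)
  then show ?thesis
    unfolding Phi_Airy_def Sf_def
    using exp_lie_eval[OF Yb_holo[OF hb] Mb, of a z] z by (simp add: Ann_def)
qed

lemma contour_zero:
  fixes b :: "nat \<Rightarrow> complex"
  assumes hb: "\<And>z. norm z < Mbar \<Longrightarrow> summable (\<lambda>k. b k * z^k)" and Mb: "0 < Mbar"
    and r: "0 < r" "norm a < r^2" "r^2 + norm a < Mbar^2"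
  shows "contour_integral (circlepath 0 r) (form_Airy (Phi_Airy a b) m n) = 0"
proof -
  define H where "H s = Yb b s ^ m * (s^2 + a)^n * (2 * s)" for s
  have Hhol: "H holomorphic_on ball 0 Mbar"
    unfolding H_def[abs_def] using Yb_holo[OF hb] by (intro holomorphic_intros)
  obtain P where P: "\<And>s. s \<in> ball 0 Mbar \<Longrightarrow> (P has_field_derivative H s) (at s within ball 0 Mbar)"
    using holomorphic_convex_primitive'[OF convex_ball open_ball Hhol] by blast
  have P': "(P has_field_derivative H s) (at s)" if "s \<in> ball 0 Mbar" for s
    using P[OF that] at_within_open[OF that open_ball] by simp
  have der: "((\<lambda>z. P (Sf a z)) has_field_derivative form_Airy (Phi_Airy a b) m n z) (at z within Ann a Mbar)"
    if z: "z \<in> Ann a Mbar" for z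
  proof -
    have z0: "z \<noteq> 0" using Ann_nz z by blast
    have Snz: "Sf a z \<noteq> 0" using Sf_nz z by (auto simp: Ann_def)
    have Sb: "Sf a z \<in> ball 0 Mbar" using Sf_norm[OF z Mb] by simp
    have "((\<lambda>z. P (Sf a z)) has_field_derivative H (Sf a z) * (z / Sf a z)) (at z)"
      by (rule DERIV_chain2[OF P'[OF Sb] Sf_deriv[OF z]])
    moreover have "H (Sf a z) * (z / Sf a z) = form_Airy (Phi_Airy a b) m n z"
    proof -
      have e1: "z - Phi_Airy a b z / (2 * z) = Yb b (Sf a z)"
        using Phi_formula[OF hb Mb z] z0 by (simp add: field_simps power2_eq_square)
      have e2: "(Sf a z)^2 + a = z^2" using Sf_sq[OF z0, of a] by simp
      have e3: "(z^2)^n = (z^n)^2" by (metis power_mult mult.commute)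
      show ?thesis
        unfolding form_Airy_def e1 H_def e2 using Snz e3
        by (simp add: power_mult field_simps)
    qed
    ultimately show ?thesis by (simp add: has_field_derivative_at_within)
  qed
  have sub: "path_image (circlepath 0 r) \<subseteq> Ann a Mbar"
    using r by (auto simp: Ann_def)
  have "(form_Airy (Phi_Airy a b) m n has_contour_integral
          (P (Sf a (pathfinish (circlepath 0 r))) - P (Sf a (pathstart (circlepath 0 r))))) (circlepath 0 r)"
    by (rule contour_integral_primitive[OF der valid_path_circlepath sub])
  then show ?thesis
    by (simp add: contour_integral_unique)
qed


lemma LSz_cong:
  assumes "LSz r1 r2 f" "\<And>z. r1 < norm z \<Longrightarrow> norm z < r2 \<Longrightarrow> f z = g z"
  shows "LSz r1 r2 g"
  using assms unfolding LSz_def by metis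

lemma LS1:
  assumes "0 \<le> r1"
  shows "LSz r1 r2 (\<lambda>z. 2 * z^2)"
proof (rule LSz_family[where c="\<lambda>_::unit. 2" and e="\<lambda>_. 2"])
  fix z :: complex
  show "((\<lambda>j::unit. 2 * z powi 2) has_sum 2 * z^2) UNIV"
    by (rule has_sum_finiteI) auto
qed (use assms in auto)

lemma LS2:
  fixes b :: "nat \<Rightarrow> complex"
  assumes hb: "\<And>z. norm z < Mbar \<Longrightarrow> summable (\<lambda>k. b k * z^k)" and Mb: "0 < Mbar"
    and r1: "0 \<le> r1" and ann: "\<And>z. r1 < norm z \<Longrightarrow> norm z < r2 \<Longrightarrow> z \<in> Ann a Mbar"
  shows "LSz r1 r2 (\<lambda>z. -2 * z * Ye b (z^2 - a))"
proof -
  define T where "T = Mbar^2 - norm a"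
  define Fe where "Fe u = Ye b (u - a)" for u
  have "(Ye b \<circ> (\<lambda>u. u - a)) holomorphic_on ball 0 T"
  proof (rule holomorphic_on_compose_gen[OF _ Ye_holo[OF hb Mb]])
    show "(\<lambda>u. u - a) holomorphic_on ball 0 T" by (intro holomorphic_intros)
    show "(\<lambda>u. u - a) ` ball 0 T \<subseteq> ball 0 (Mbar^2)"
    proof
      fix v assume "v \<in> (\<lambda>u. u - a) ` ball 0 T"
      then obtain u where u: "norm u < T" "v = u - a" by auto
      have "norm (u - a) \<le> norm u + norm a" by (rule norm_triangle_ineq4)
      then show "v \<in> ball 0 (Mbar^2)" using u by (simp add: T_def)
    qed
  qed
  then have Fehol: "Fe holomorphic_on ball 0 T" by (simp add: Fe_def[abs_def] o_def)
  show ?thesis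
  proof (rule LSz_family[where c="\<lambda>n. -2 * ((deriv ^^ n) Fe 0 / fact n)" and e="\<lambda>n. int (2*n+1)"])
    fix z :: complex assume z: "r1 < norm z" "norm z < r2"
    then have zA: "z \<in> Ann a Mbar" by (rule ann)
    then have "norm (z^2) < T" by (simp add: Ann_def T_def norm_power)
    from has_sum_cmult_right[OF taylor_has_sum(1)[OF Fehol this], of "-2 * z"]
    have H: "((\<lambda>n. -2 * z * ((deriv ^^ n) Fe 0 / fact n * (z^2)^n)) has_sum (-2 * z * Ye b (z^2 - a))) UNIV"
      by (simp only: Fe_def)
    have eq: "-2 * z * ((deriv ^^ n) Fe 0 / fact n * (z^2)^n)
        = -2 * ((deriv ^^ n) Fe 0 / fact n) * z powi int (2*n+1)" for n
    proof -
      have "z powi int (2*n+1) = z^(2*n+1)" by (simp only: power_int_of_nat)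
      then show ?thesis by (simp add: power_mult[symmetric] mult_ac)
    qed
    have fg: "(\<lambda>n. -2 * z * ((deriv ^^ n) Fe 0 / fact n * (z^2)^n))
        = (\<lambda>n. -2 * ((deriv ^^ n) Fe 0 / fact n) * z powi int (2*n+1))"
      by (rule ext) (rule eq)
    show "((\<lambda>n. -2 * ((deriv ^^ n) Fe 0 / fact n) * z powi int (2*n+1)) has_sum (-2 * z * Ye b (z^2 - a))) UNIV"
      by (subst fg[symmetric]) (rule H)
  qed (use r1 in auto)
qed

lemma powi_split:
  fixes z :: complex
  assumes "z \<noteq> 0"
  shows "z powi (2 + 2 * int i - 2 * int j) = z^2 * (z^2)^i / (z^2)^j"
proof -
  have "2 + 2 * int i - 2 * int j = int (2 + 2*i) - int (2*j)" by simp
  then have "z powi (2 + 2 * int i - 2 * int j) = z powi int (2 + 2*i) / z powi int (2*j)"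
    using assms by (simp add: power_int_diff)
  also have "\<dots> = z^(2 + 2*i) / z^(2*j)" by (simp only: power_int_of_nat)
  also have "\<dots> = z^2 * (z^2)^i / (z^2)^j" by (simp add: power_add power_mult power2_eq_square)
  finally show ?thesis .
qed

lemma LS3:
  fixes b :: "nat \<Rightarrow> complex"
  assumes hb: "\<And>z. norm z < Mbar \<Longrightarrow> summable (\<lambda>k. b k * z^k)" and Mb: "0 < Mbar"
    and r1: "0 \<le> r1" and ann: "\<And>z. r1 < norm z \<Longrightarrow> norm z < r2 \<Longrightarrow> z \<in> Ann a Mbar"
  shows "LSz r1 r2 (\<lambda>z. -2 * z^2 * (Yo b (z^2 - a) * csqrt (1 - a / z^2)))"
proof -
  define T where "T = Mbar^2 - norm a"
  define Fo where "Fo u = Yo b (u - a)" for u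
  define Cq where "Cq w = csqrt (1 - w)" for w
  have "(Yo b \<circ> (\<lambda>u. u - a)) holomorphic_on ball 0 T"
  proof (rule holomorphic_on_compose_gen[OF _ Yo_holo[OF hb Mb]])
    show "(\<lambda>u. u - a) holomorphic_on ball 0 T" by (intro holomorphic_intros)
    show "(\<lambda>u. u - a) ` ball 0 T \<subseteq> ball 0 (Mbar^2)"
    proof
      fix v assume "v \<in> (\<lambda>u. u - a) ` ball 0 T"
      then obtain u where u: "norm u < T" "v = u - a" by auto
      have "norm (u - a) \<le> norm u + norm a" by (rule norm_triangle_ineq4)
      then show "v \<in> ball 0 (Mbar^2)" using u by (simp add: T_def)
    qed
  qed
  then have Fohol: "Fo holomorphic_on ball 0 T" by (simp add: Fo_def[abs_def] o_def)
  have Cqhol: "Cq holomorphic_on ball 0 1"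
  proof -
    have "1 - w \<notin> \<real>\<^sub>\<le>\<^sub>0" if "w \<in> ball 0 1" for w :: complex
    proof -
      have "Re w < 1" using that abs_Re_le_cmod[of w] by auto
      then show ?thesis by (auto simp: complex_nonpos_Reals_iff)
    qed
    then show ?thesis unfolding Cq_def[abs_def] by (intro holomorphic_intros) auto
  qed
  show ?thesis
  proof (rule LSz_family[where c="\<lambda>(i,j). -2 * ((deriv ^^ i) Fo 0 / fact i) * ((deriv ^^ j) Cq 0 / fact j) * a^j"
        and e="\<lambda>(i,j). 2 + 2 * int i - 2 * int j"])
    fix z :: complex assume z: "r1 < norm z" "norm z < r2"
    then have zA: "z \<in> Ann a Mbar" by (rule ann)
    then have z0: "z \<noteq> 0" by (rule Ann_nz)
    have n1: "norm (z^2) < T" using zA by (simp add: Ann_def T_def norm_power)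
    have n2: "norm (a / z^2) < 1" using zA z0 by (simp add: Ann_def norm_divide norm_power)
    have P: "((\<lambda>(i,j). ((deriv ^^ i) Fo 0 / fact i * (z^2)^i) * ((deriv ^^ j) Cq 0 / fact j * (a / z^2)^j))
         has_sum (Fo (z^2) * Cq (a / z^2))) UNIV"
      by (rule has_sum_product_complex[OF taylor_has_sum(1)[OF Fohol n1] taylor_has_sum(1)[OF Cqhol n2]])
    from has_sum_cmult_right[OF P, of "-2 * z^2"]
    have H: "((\<lambda>p. -2 * z^2 * (case p of (i,j) \<Rightarrow> ((deriv ^^ i) Fo 0 / fact i * (z^2)^i) * ((deriv ^^ j) Cq 0 / fact j * (a / z^2)^j)))
         has_sum (-2 * z^2 * (Yo b (z^2 - a) * csqrt (1 - a / z^2)))) UNIV"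
      by (simp only: Fo_def Cq_def)
    have eq: "-2 * z^2 * (case p of (i,j) \<Rightarrow> ((deriv ^^ i) Fo 0 / fact i * (z^2)^i) * ((deriv ^^ j) Cq 0 / fact j * (a / z^2)^j))
        = (case p of (i,j) \<Rightarrow> -2 * ((deriv ^^ i) Fo 0 / fact i) * ((deriv ^^ j) Cq 0 / fact j) * a^j) * z powi (case p of (i,j) \<Rightarrow> 2 + 2 * int i - 2 * int j)" for p
    proof (cases p)
      case (Pair i j)
      have "(z^2)^j \<noteq> 0" using z0 by simp
      then show ?thesis unfolding Pair prod.case powi_split[OF z0]
        using z0 by (simp add: power_divide field_simps)
    qed
    have fg: "(\<lambda>p. -2 * z^2 * (case p of (i,j) \<Rightarrow> ((deriv ^^ i) Fo 0 / fact i * (z^2)^i) * ((deriv ^^ j) Cq 0 / fact j * (a / z^2)^j)))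
        = (\<lambda>p. (case p of (i,j) \<Rightarrow> -2 * ((deriv ^^ i) Fo 0 / fact i) * ((deriv ^^ j) Cq 0 / fact j) * a^j) * z powi (case p of (i,j) \<Rightarrow> 2 + 2 * int i - 2 * int j))"
      by (rule ext) (rule eq)
    show "((\<lambda>p. (case p of (i,j) \<Rightarrow> -2 * ((deriv ^^ i) Fo 0 / fact i) * ((deriv ^^ j) Cq 0 / fact j) * a^j) * z powi (case p of (i,j) \<Rightarrow> 2 + 2 * int i - 2 * int j))
        has_sum (-2 * z^2 * (Yo b (z^2 - a) * csqrt (1 - a / z^2)))) UNIV"
      by (subst fg[symmetric]) (rule H)
  next
    fix p :: "nat \<times> nat"
    show "(case p of (i,j) \<Rightarrow> 2 + 2 * int i - 2 * int j) \<noteq> -1"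
    proof (cases p)
      case (Pair i j)
      have "2 + 2 * int i - 2 * int j \<noteq> -1" by presburger
      then show ?thesis using Pair by simp
    qed
  qed (use r1 in auto)
qed


theorem proposition2p44:
  fixes \<epsilon> M Mbar :: real and a :: complex and b :: "nat \<Rightarrow> complex"
  assumes "0 < \<epsilon>" and "\<epsilon> < M" and "M < Mbar"
    and "\<And>z. norm z < Mbar \<Longrightarrow> summable (\<lambda>k. b k * z ^ k)"
    and "norm a < min (Mbar\<^sup>2 - M\<^sup>2) (\<epsilon>\<^sup>2)"
  shows "W_Airy \<epsilon> M (Phi_Airy a b)
    \<and> (\<forall>m n. res_Airy \<epsilon> M (form_Airy (Phi_Airy a b) m n) = 0)
    \<and> (\<forall>i\<ge>1. H_Airy \<epsilon> M i (Phi_Airy a b) = 0)"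
proof -
  note hb = assms(4)
  have Mb: "0 < Mbar" using assms(1-3) by linarith
  have aeps: "norm a < \<epsilon>^2" and aM: "norm a < Mbar^2 - M^2" using assms(5) by auto
  define r1 where "r1 = sqrt (norm a)"
  define r2 where "r2 = sqrt (Mbar^2 - norm a)"
  have r1: "0 \<le> r1" by (simp add: r1_def)
  have M0: "0 \<le> M" using assms(1,2) by linarith
  have M2: "0 \<le> M^2" by simp
  have T0: "0 \<le> Mbar^2 - norm a" using aM M2 by linarith
  have ann: "z \<in> Ann a Mbar" if z: "r1 < norm z" "norm z < r2" for z
  proof -
    have "norm a = r1^2" by (simp add: r1_def)
    also have "r1^2 < (norm z)^2" using z(1) r1 by (simp add: power_strict_mono)
    finally have 1: "norm a < (norm z)^2" .
    have "(norm z)^2 < r2^2" using z(2) by (simp add: power_strict_mono)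
    also have "r2^2 = Mbar^2 - norm a" using T0 by (simp add: r2_def)
    finally show "z \<in> Ann a Mbar" using 1 by (simp add: Ann_def)
  qed
  have r1e: "r1 < \<epsilon>"
  proof -
    have "r1 < sqrt (\<epsilon>^2)" unfolding r1_def using aeps by (rule real_sqrt_less_mono)
    also have "sqrt (\<epsilon>^2) = \<epsilon>" using assms(1) by simp
    finally show ?thesis .
  qed
  have Mr2: "M < r2"
  proof -
    have "M^2 < Mbar^2 - norm a" using aM by linarith
    then have "sqrt (M^2) < r2" unfolding r2_def by (rule real_sqrt_less_mono)
    also have "sqrt (M^2) = M" using M0 by simp
    finally show ?thesis by simp
  qed
  have LS: "LSz r1 r2 (Phi_Airy a b)"
  proof (rule LSz_cong[OF LSz_add[OF LSz_add[OF LS1[OF r1] LS2[OF hb Mb r1 ann]] LS3[OF hb Mb r1 ann]]])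
    fix z :: complex assume z: "r1 < norm z" "norm z < r2"
    then have zA: "z \<in> Ann a Mbar" by (rule ann)
    then have z0: "z \<noteq> 0" by (rule Ann_nz)
    have nS: "norm (Sf a z) < Mbar" by (rule Sf_norm[OF zA Mb])
    have sp: "Yb b (Sf a z) = Ye b ((Sf a z)^2) + Sf a z * Yo b ((Sf a z)^2)"
      by (rule Y_split[OF hb Mb nS])
    have sq: "(Sf a z)^2 = z^2 - a" by (rule Sf_sq[OF z0])
    have zS: "z * Sf a z = z^2 * csqrt (1 - a / z^2)" by (simp add: Sf_def power2_eq_square)
    have "Phi_Airy a b z = 2 * z^2 - 2 * z * Yb b (Sf a z)" by (rule Phi_formula[OF hb Mb zA])
    also have "\<dots> = 2 * z^2 - 2 * z * Ye b (z^2 - a) - 2 * (z * Sf a z) * Yo b (z^2 - a)"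
      unfolding sp sq by (simp add: algebra_simps)
    also have "\<dots> = 2 * z^2 + -2 * z * Ye b (z^2 - a) + -2 * z^2 * (Yo b (z^2 - a) * csqrt (1 - a / z^2))"
      unfolding zS by (simp add: algebra_simps)
    finally show "2 * z^2 + -2 * z * Ye b (z^2 - a) + -2 * z^2 * (Yo b (z^2 - a) * csqrt (1 - a / z^2)) = Phi_Airy a b z"
      by simp
  qed
  have W: "W_Airy \<epsilon> M (Phi_Airy a b)" by (rule W_from_LSz[OF r1 r1e Mr2 LS])
  have R: "\<forall>m n. res_Airy \<epsilon> M (form_Airy (Phi_Airy a b) m n) = 0"
  proof (intro allI)
    fix m n
    define r where "r = (\<epsilon> + M) / 2"
    have r: "0 < r" "\<epsilon> < r" "r < M" using assms(1,2) by (auto simp: r_def)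
    have "\<epsilon>^2 < r^2" using r assms(1) by (simp add: power_strict_mono)
    then have 1: "norm a < r^2" using aeps by linarith
    have "r^2 < M^2" using r by (simp add: power_strict_mono)
    then have 2: "r^2 + norm a < Mbar^2" using aM by linarith
    show "res_Airy \<epsilon> M (form_Airy (Phi_Airy a b) m n) = 0"
      unfolding res_Airy_def using contour_zero[OF hb Mb r(1) 1 2, of m n] by (simp add: r_def)
  qed
  have Hc: "\<forall>i\<ge>1. H_Airy \<epsilon> M i (Phi_Airy a b) = 0" using R by (simp add: H_Airy_def)
  show ?thesis using W R Hc by blast
qed

end
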